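(* Let $T$ be a trunk of an order $P$. Any two chains $C,C'\subseteq T$ that are maximal among the chains contained in $T$ are order-isomorphic (in particular they have the same cardinality). Moreover, if $T$ is a full trunk of $P$, then every element of $T$ belongs to a chain contained in $T$ that is order-isomorphic to a maximum chain of $P$.
   Context: Orders are partial orders; $x\sim y$ means $x\ne y$ and $x,y$ incomparable. A trunk of $P$ is a subset $T$ (with the induced order) such that for all pairwise distinct $x,y,z\in T$, $x\sim y$ and $y\sim z$ imply $x\sim z$. A chain of $P$ is maximum if it is maximal under inclusion and no chain of $P$ has greater cardinality (for a well-founded order: greater order type). A full trunk is a trunk containing at least one maximum chain of $P$. *)

theory Defs
  imports Main
begin

text \<open>An order P is represented by a carrier set P of a type of class order
  (with the induced partial order).\<close>

definition incomp :: "'a::order \<Rightarrow> 'a \<Rightarrow> bool" where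
  "incomp x y \<longleftrightarrow> x \<noteq> y \<and> \<not> x \<le> y \<and> \<not> y \<le> x"

definition trunk :: "'a::order set \<Rightarrow> 'a set \<Rightarrow> bool" where
  "trunk P T \<longleftrightarrow> T \<subseteq> P \<and>
     (\<forall>x\<in>T. \<forall>y\<in>T. \<forall>z\<in>T. x \<noteq> y \<and> y \<noteq> z \<and> x \<noteq> z \<and> incomp x y \<and> incomp y z
        \<longrightarrow> incomp x z)"

definition maximal_chain_in :: "'a::order set \<Rightarrow> 'a set \<Rightarrow> bool" where
  "maximal_chain_in S C \<longleftrightarrow> C \<subseteq> S \<and> Complete_Partial_Order.chain (\<le>) C \<and>
     (\<forall>D. D \<subseteq> S \<and> Complete_Partial_Order.chain (\<le>) D \<and> C \<subseteq> D \<longrightarrow> D = C)"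

definition order_iso :: "'a::order set \<Rightarrow> 'b::order set \<Rightarrow> bool" where
  "order_iso A B \<longleftrightarrow> (\<exists>f. bij_betw f A B \<and> (\<forall>x\<in>A. \<forall>y\<in>A. x \<le> y \<longleftrightarrow> f x \<le> f y))"

definition well_founded_order :: "'a::order set \<Rightarrow> bool" where
  "well_founded_order P \<longleftrightarrow>
     (\<forall>S. S \<subseteq> P \<and> S \<noteq> {} \<longrightarrow> (\<exists>m\<in>S. \<forall>s\<in>S. \<not> s < m))"

text \<open>Maximum chain: maximal under inclusion, and no chain is larger:
  for a well-founded order, no chain has greater order type (i.e. every chain
  order-embeds into C; chains are then well-orders); otherwise no chain has
  greater cardinality.\<close>

definition maximum_chain :: "'a::order set \<Rightarrow> 'a set \<Rightarrow> bool" where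
  "maximum_chain P C \<longleftrightarrow> maximal_chain_in P C \<and>
     (\<forall>D. D \<subseteq> P \<and> Complete_Partial_Order.chain (\<le>) D \<longrightarrow>
        (if well_founded_order P
         then (\<exists>f. f ` D \<subseteq> C \<and> (\<forall>x\<in>D. \<forall>y\<in>D. x < y \<longrightarrow> f x < f y))
         else (\<exists>f. inj_on f D \<and> f ` D \<subseteq> C)))"

definition full_trunk :: "'a::order set \<Rightarrow> 'a set \<Rightarrow> bool" where
  "full_trunk P T \<longleftrightarrow> trunk P T \<and> (\<exists>C. maximum_chain P C \<and> C \<subseteq> T)"

end

theory Submission
  imports Defs
begin

definition eqv :: "'a::order \<Rightarrow> 'a \<Rightarrow> bool" where
  "eqv x y \<longleftrightarrow> x = y \<or> incomp x y"

lemma eqv_sym: "eqv x y \<Longrightarrow> eqv y x"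
  by (auto simp: eqv_def incomp_def)

lemma eqv_trans:
  assumes "trunk P T" "x \<in> T" "y \<in> T" "z \<in> T" "eqv x y" "eqv y z"
  shows "eqv x z"
proof (cases "x = z")
  case True then show ?thesis by (simp add: eqv_def)
next
  case False
  show ?thesis
  proof (cases "x = y \<or> y = z")
    case True then show ?thesis using assms by auto
  next
    case F2: False
    then have "incomp x y" "incomp y z" using assms(5,6) by (auto simp: eqv_def)
    then show ?thesis using assms(1-4) F2 False unfolding trunk_def eqv_def by blast
  qed
qed

lemma comp_not_eqv: "a \<le> b \<or> b \<le> a \<Longrightarrow> eqv a b \<Longrightarrow> a = b"
  by (auto simp: eqv_def incomp_def)

lemma not_eqv_comp: "\<not> eqv a b \<Longrightarrow> a \<le> b \<or> b \<le> a"
  by (auto simp: eqv_def incomp_def)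

lemma mc_exists:
  assumes "maximal_chain_in T C" "y \<in> T"
  shows "\<exists>c\<in>C. eqv c y"
proof (rule ccontr)
  assume A: "\<not> ?thesis"
  have ch: "Complete_Partial_Order.chain (\<le>) C" and sub: "C \<subseteq> T"
    using assms(1) by (auto simp: maximal_chain_in_def)
  have "Complete_Partial_Order.chain (\<le>) (insert y C)"
    using ch A not_eqv_comp unfolding Complete_Partial_Order.chain_def by blast
  then have "insert y C = C" using assms sub unfolding maximal_chain_in_def by blast
  then have "y \<in> C" by blast
  then show False using A by (auto simp: eqv_def)
qed

lemma mc_unique:
  assumes "trunk P T" "maximal_chain_in T C" "c \<in> C" "c' \<in> C" "y \<in> T"
    "eqv c y" "eqv c' y"
  shows "c = c'"
proof -
  have sub: "C \<subseteq> T" and ch: "Complete_Partial_Order.chain (\<le>) C"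
    using assms(2) by (auto simp: maximal_chain_in_def)
  have "eqv c c'" using eqv_trans[OF assms(1), of c y c'] assms sub eqv_sym by blast
  moreover have "c \<le> c' \<or> c' \<le> c" using ch assms(3,4) unfolding Complete_Partial_Order.chain_def by blast
  ultimately show ?thesis using comp_not_eqv by blast
qed

lemma shift_left:
  assumes "trunk P T" "a \<in> T" "b \<in> T" "a' \<in> T" "a < b" "eqv a a'" "\<not> eqv a b"
  shows "a' < b"
proof -
  have "\<not> eqv a' b"
    using eqv_trans[OF assms(1) assms(2) assms(4) assms(3)] assms(6) assms(7) by blast
  then have c: "a' \<le> b \<or> b \<le> a'" by (rule not_eqv_comp)
  have "a' \<noteq> b" using \<open>\<not> eqv a' b\<close> by (auto simp: eqv_def)
  moreover have "\<not> b < a'"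
  proof
    assume "b < a'"
    then have "a < a'" using assms(5) by simp
    then show False using assms(6) by (auto simp: eqv_def incomp_def)
  qed
  ultimately show ?thesis using c by auto
qed

lemma shift_right:
  assumes "trunk P T" "a \<in> T" "b \<in> T" "b' \<in> T" "a < b" "eqv b b'" "\<not> eqv a b"
  shows "a < b'"
proof -
  have "\<not> eqv a b'"
    using eqv_trans[OF assms(1) assms(2) assms(3) assms(4)] eqv_trans[OF assms(1) assms(2) assms(4) assms(3)]
      assms(6) assms(7) eqv_sym by blast
  then have c: "a \<le> b' \<or> b' \<le> a" by (rule not_eqv_comp)
  have "a \<noteq> b'" using \<open>\<not> eqv a b'\<close> by (auto simp: eqv_def)
  moreover have "\<not> b' < a"
  proof
    assume "b' < a"
    then have "b' < b" using assms(5) by simp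
    then show False using assms(6) by (auto simp: eqv_def incomp_def)
  qed
  ultimately show ?thesis using c by auto
qed

lemma shift:
  assumes "trunk P T" "a \<in> T" "b \<in> T" "a' \<in> T" "b' \<in> T" "a < b" "eqv a a'" "eqv b b'" "\<not> eqv a b"
  shows "a' < b'"
proof -
  have "a' < b" using shift_left[OF assms(1,2,3,4,6,7,9)] .
  moreover have "\<not> eqv a' b"
    using eqv_trans[OF assms(1) assms(2) assms(4) assms(3)] assms(7) assms(9) by blast
  ultimately show ?thesis using shift_right[OF assms(1,4,3,5) _ assms(8)] by blast
qed

lemma mc_iso:
  assumes tr: "trunk P T" and mC: "maximal_chain_in T C" and mC': "maximal_chain_in T C'"
  shows "order_iso C C'"
proof -
  have subC: "C \<subseteq> T" and chC: "Complete_Partial_Order.chain (\<le>) C"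
    using mC by (auto simp: maximal_chain_in_def)
  have subC': "C' \<subseteq> T" and chC': "Complete_Partial_Order.chain (\<le>) C'"
    using mC' by (auto simp: maximal_chain_in_def)
  define f where "f c = (SOME c'. c' \<in> C' \<and> eqv c c')" for c
  have f: "f c \<in> C' \<and> eqv c (f c)" if "c \<in> C" for c
  proof -
    have "c \<in> T" using that subC by blast
    then obtain c' where "c' \<in> C'" "eqv c' c" using mc_exists[OF mC', of c] by blast
    then have "\<exists>c'. c' \<in> C' \<and> eqv c c'" using eqv_sym by blast
    then show ?thesis unfolding f_def by (rule someI_ex)
  qed
  have lt: "f c < f d" if "c \<in> C" "d \<in> C" "c < d" for c d
  proof -
    have "\<not> eqv c d" using that comp_not_eqv[of c d] by (metis less_le)
    moreover have "c \<in> T" "d \<in> T" using that subC by auto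
    moreover have "f c \<in> T" "f d \<in> T" "eqv c (f c)" "eqv d (f d)" using f that subC' by auto
    ultimately show ?thesis using shift[OF tr, of c d "f c" "f d"] that(3) by simp
  qed
  have mono: "c \<le> d \<longleftrightarrow> f c \<le> f d" if "c \<in> C" "d \<in> C" for c d
  proof
    assume "c \<le> d"
    then show "f c \<le> f d" using lt[of c d] that by (cases "c = d") (auto simp: less_le)
  next
    assume h: "f c \<le> f d"
    show "c \<le> d"
    proof (rule ccontr)
      assume "\<not> c \<le> d"
      moreover have "c \<le> d \<or> d \<le> c" using chC that unfolding Complete_Partial_Order.chain_def by blast
      ultimately have "d < c" by auto
      then have "f d < f c" using lt that by blast
      then show False using h by simp
    qed
  qed
  have inj: "inj_on f C"
  proof (rule inj_onI)
    fix c d assume "c \<in> C" "d \<in> C" "f c = f d"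
    then show "c = d" using mono[of c d] mono[of d c] by (simp add: order.antisym)
  qed
  have surj: "f ` C = C'"
  proof
    show "f ` C \<subseteq> C'" using f by blast
  next
    show "C' \<subseteq> f ` C"
    proof
      fix c' assume c': "c' \<in> C'"
      obtain c where c: "c \<in> C" "eqv c c'" using mc_exists[OF mC] c' subC' by blast
      have "c \<in> T" using c subC by auto
      moreover have "eqv c' c" using c(2) eqv_sym by blast
      ultimately have "f c = c'"
        using mc_unique[OF tr mC', of "f c" c' c] f[OF c(1)] c' eqv_sym[of c "f c"] by blast
      then show "c' \<in> f ` C" using c by blast
    qed
  qed
  show ?thesis unfolding order_iso_def using inj surj mono by (auto simp: bij_betw_def)
qed

theorem theorem5p4:
  fixes P T :: "'a::order set"
  assumes "trunk P T"
  shows "(\<forall>C C'. maximal_chain_in T C \<and> maximal_chain_in T C' \<longrightarrow> order_iso C C')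
     \<and> (full_trunk P T \<longrightarrow>
          (\<forall>x\<in>T. \<exists>C. C \<subseteq> T \<and> Complete_Partial_Order.chain (\<le>) C \<and> x \<in> C \<and>
                    (\<exists>M. maximum_chain P M \<and> order_iso C M)))"
proof (intro conjI impI allI ballI)
  fix C C' assume "maximal_chain_in T C \<and> maximal_chain_in T C'"
  then show "order_iso C C'" using mc_iso[OF assms] by blast
next
  fix x assume ft: "full_trunk P T" and x: "x \<in> T"
  obtain M where M: "maximum_chain P M" "M \<subseteq> T" using ft by (auto simp: full_trunk_def)
  have TP: "T \<subseteq> P" using assms by (auto simp: trunk_def)
  have chM: "Complete_Partial_Order.chain (\<le>) M" using M by (auto simp: maximum_chain_def maximal_chain_in_def)
  have mP: "maximal_chain_in P M" using M(1) unfolding maximum_chain_def by (rule conjunct1)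
  have mM: "maximal_chain_in T M"
    unfolding maximal_chain_in_def
  proof (intro conjI allI impI)
    show "M \<subseteq> T" by (rule M(2))
    show "Complete_Partial_Order.chain (\<le>) M" by (rule chM)
    fix D assume "D \<subseteq> T \<and> Complete_Partial_Order.chain (\<le>) D \<and> M \<subseteq> D"
    then have "D \<subseteq> P \<and> Complete_Partial_Order.chain (\<le>) D \<and> M \<subseteq> D" using TP by blast
    then show "D = M" using mP unfolding maximal_chain_in_def by blast
  qed
  define C where "C = insert x {m\<in>M. \<not> eqv m x}"
  have subC: "C \<subseteq> T" using M x by (auto simp: C_def)
  have chC: "Complete_Partial_Order.chain (\<le>) C"
    unfolding Complete_Partial_Order.chain_def
  proof (intro ballI)
    fix a b assume "a \<in> C" "b \<in> C"
    then have a: "a = x \<or> (a \<in> M \<and> \<not> eqv a x)" and b: "b = x \<or> (b \<in> M \<and> \<not> eqv b x)"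
      by (auto simp: C_def)
    have cM: "\<forall>u\<in>M. \<forall>v\<in>M. u \<le> v \<or> v \<le> u" using chM unfolding Complete_Partial_Order.chain_def by blast
    show "a \<le> b \<or> b \<le> a"
      using a b cM not_eqv_comp[of a x] not_eqv_comp[of b x] by auto
  qed
  have mC: "maximal_chain_in T C"
    unfolding maximal_chain_in_def
  proof (intro conjI allI impI subC chC)
    fix D assume D: "D \<subseteq> T \<and> Complete_Partial_Order.chain (\<le>) D \<and> C \<subseteq> D"
    have "D \<subseteq> C"
    proof
      fix d assume d: "d \<in> D"
      have xD: "x \<in> D" using D by (auto simp: C_def)
      have comp: "a \<le> b \<or> b \<le> a" if "a \<in> D" "b \<in> D" for a b
        using D that unfolding Complete_Partial_Order.chain_def by blast
      show "d \<in> C"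
      proof (cases "eqv d x")
        case True
        then have "d = x" using comp[OF d xD] comp_not_eqv by blast
        then show ?thesis by (simp add: C_def)
      next
        case False
        obtain m where m: "m \<in> M" "eqv m d" using mc_exists[OF mM, of d] d D by blast
        have "\<not> eqv m x"
          using eqv_trans[OF assms, of d m x] m False eqv_sym d D x M(2) by blast
        then have "m \<in> C" using m by (simp add: C_def)
        then have "m \<in> D" using D by blast
        then have "m = d" using comp[OF _ d] m comp_not_eqv by blast
        then show ?thesis using \<open>m \<in> C\<close> by simp
      qed
    qed
    then show "D = C" using D by blast
  qed
  have "order_iso C M" using mc_iso[OF assms mC mM] .
  moreover have "x \<in> C" by (simp add: C_def)
  ultimately show "\<exists>C. C \<subseteq> T \<and> Complete_Partial_Order.chain (\<le>) C \<and> x \<in> C \<and>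
                    (\<exists>M. maximum_chain P M \<and> order_iso C M)"
    using subC chC M(1) by blast
qed

end
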